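(* Let $n\ge1$ and $D_n^{(\mathsf{cyc},\mathsf{exc})}(q,t)=\sum_{\sigma\in\mathfrak{D}_n}q^{\mathsf{cyc}\,\sigma}t^{\mathsf{exc}\,\sigma}$. Then $$D_{n}^{(\mathsf{cyc}, \mathsf{exc})}(q, t)=\left(\frac{1+xt}{1+x}\right)^{n}P^{(\mathsf{cyc}, \mathsf{cpk},\mathsf{exc})}\left(\mathfrak{D}_n; q, \frac{(1+x)^{2}t}{(x+t)(1+xt)},\frac{x+t}{1+xt}\right),$$ equivalently, $$P^{(\mathsf{cyc}, \mathsf{cpk},\mathsf{exc})}(\mathfrak{D}_n; q, x,t)=\left(\frac{1+u}{1+uv}\right)^{n}D_{n}^{(\mathsf{cyc}, \mathsf{exc})}(q, v),$$ where $u=\frac{1+t^{2}-2xt-(1-t)\sqrt{(1+t)^{2}-4xt}}{2(1-x)t}$ and $v=\frac{(1+t)^{2}-2xt-(1+t)\sqrt{(1+t)^{2}-4xt}}{2xt}$.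
   Context: $\mathfrak{D}_n$ is the set of derangements of $[n]$ (permutations with no fixed point). $P^{(\mathsf{stat}_1,\ldots,\mathsf{stat}_m)}(\Omega;t_1,\ldots,t_m)=\sum_{\sigma\in\Omega}\prod_j t_j^{\mathsf{stat}_j\sigma}$. For a permutation $\sigma$: $\mathsf{cyc}\,\sigma$ is its number of cycles, $\mathsf{exc}\,\sigma=\#\{i:\sigma(i)>i\}$, and $\mathsf{cpk}\,\sigma$ is the number of cyclic peaks, i.e. values $x$ with $\sigma^{-1}(x)<x>\sigma(x)$. *)

theory Defs
  imports Complex_Main "HOL-Combinatorics.Permutations" "HOL-Combinatorics.Orbits"
begin

definition derangements :: "nat \<Rightarrow> (nat \<Rightarrow> nat) set" where
  "derangements n = {\<sigma>. \<sigma> permutes {1..n} \<and> (\<forall>i\<in>{1..n}. \<sigma> i \<noteq> i)}"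

definition cyc :: "nat \<Rightarrow> (nat \<Rightarrow> nat) \<Rightarrow> nat" where
  "cyc n \<sigma> = card ((\<lambda>i. orbit \<sigma> i) ` {1..n})"

definition exc :: "nat \<Rightarrow> (nat \<Rightarrow> nat) \<Rightarrow> nat" where
  "exc n \<sigma> = card {i\<in>{1..n}. \<sigma> i > i}"

definition cpk :: "nat \<Rightarrow> (nat \<Rightarrow> nat) \<Rightarrow> nat" where
  "cpk n \<sigma> = card {x\<in>{1..n}. inv \<sigma> x < x \<and> \<sigma> x < x}"

end

theory Submission
  imports Defs
begin

definition hopJ :: "(nat \<Rightarrow> nat) \<Rightarrow> nat \<Rightarrow> nat" where
  "hopJ \<sigma> k = (LEAST j. 0 < j \<and> k < (\<sigma> ^^ j) k)"

definition hop :: "(nat \<Rightarrow> nat) \<Rightarrow> nat \<Rightarrow> (nat \<Rightarrow> nat)" where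
  "hop \<sigma> k = \<sigma>(inv \<sigma> k := \<sigma> k, (\<sigma> ^^ (hopJ \<sigma> k - 1)) k := k, k := (\<sigma> ^^ hopJ \<sigma> k) k)"

definition isdd :: "(nat \<Rightarrow> nat) \<Rightarrow> nat \<Rightarrow> bool" where
  "isdd \<sigma> z \<longleftrightarrow> z < inv \<sigma> z \<and> \<sigma> z < z"

definition isda :: "(nat \<Rightarrow> nat) \<Rightarrow> nat \<Rightarrow> bool" where
  "isda \<sigma> z \<longleftrightarrow> inv \<sigma> z < z \<and> z < \<sigma> z"

lemma funpow_in_S: "\<sigma> permutes S \<Longrightarrow> x \<in> S \<Longrightarrow> (\<sigma>^^m) x \<in> S"
  by (induction m) (auto simp: permutes_in_image)

lemma funpow_Suc_app: "(f ^^ Suc m) x = f ((f ^^ m) x)"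
  by simp

lemma hopJ_props:
  assumes perm: "\<sigma> permutes S" and fin: "finite S" and dd: "isdd \<sigma> k"
  shows "1 < hopJ \<sigma> k" "k < (\<sigma> ^^ hopJ \<sigma> k) k"
    "\<And>i. 0 < i \<Longrightarrow> i < hopJ \<sigma> k \<Longrightarrow> (\<sigma> ^^ i) k < k"
proof -
  have permu: "permutation \<sigma>" using perm fin permutation_permutes by blast
  have iv: "\<And>x. inv \<sigma> (\<sigma> x) = x" "\<And>x. \<sigma> (inv \<sigma> x) = x"
    using permutes_inverses[OF perm] by auto
  have pk: "k < inv \<sigma> k" and sk: "\<sigma> k < k" using dd by (auto simp: isdd_def)
  have "k \<in> orbit \<sigma> k" using permu by (rule permutation_self_in_orbit)
  then obtain n where n: "0 < n" "(\<sigma> ^^ n) k = k" unfolding orbit_altdef by auto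
  have "n \<noteq> 1" using n sk by auto
  then have "0 < n - 1" using n by auto
  moreover have "(\<sigma> ^^ (n-1)) k = inv \<sigma> k"
  proof -
    have "\<sigma> ((\<sigma> ^^ (n-1)) k) = k" using n funpow_Suc_app[where f=\<sigma> and m="n-1" and x=k]
      by (metis Suc_pred')
    then show ?thesis using iv by metis
  qed
  ultimately have ex: "\<exists>j. 0 < j \<and> k < (\<sigma> ^^ j) k" using pk by metis
  have J: "0 < hopJ \<sigma> k \<and> k < (\<sigma> ^^ hopJ \<sigma> k) k"
    unfolding hopJ_def using LeastI_ex[OF ex] .
  then show "k < (\<sigma> ^^ hopJ \<sigma> k) k" by simp
  have nl: "\<And>i. i < hopJ \<sigma> k \<Longrightarrow> \<not> (0 < i \<and> k < (\<sigma> ^^ i) k)"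
    unfolding hopJ_def by (rule not_less_Least)
  have "hopJ \<sigma> k \<noteq> 1" using J sk by auto
  then show "1 < hopJ \<sigma> k" using J by auto
  show "(\<sigma> ^^ i) k < k" if i: "0 < i" "i < hopJ \<sigma> k" for i
  proof -
    have le: "(\<sigma> ^^ i) k \<le> k" using nl[OF i(2)] i(1) by auto
    have "(\<sigma> ^^ i) k \<noteq> k"
    proof
      assume eq: "(\<sigma> ^^ i) k = k"
      have "i \<noteq> 1" using eq sk by auto
      then have i2: "0 < i - 1" using i by auto
      have "\<sigma> ((\<sigma> ^^ (i-1)) k) = k" using eq i funpow_Suc_app[where f=\<sigma> and m="i-1" and x=k]
        by (metis Suc_pred')
      then have "(\<sigma> ^^ (i-1)) k = inv \<sigma> k" using iv by metis
      then show False using nl[of "i-1"] i i2 pk by auto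
    qed
    then show ?thesis using le by auto
  qed
qed

lemma hop_main:
  assumes perm: "\<sigma> permutes S" and fin: "finite S" and kS: "k \<in> S" and dd: "isdd \<sigma> k"
  shows "hop \<sigma> k permutes S"
    and "isda (hop \<sigma> k) k"
    and "\<And>z. z \<noteq> k \<Longrightarrow> (hop \<sigma> k z < z \<longleftrightarrow> \<sigma> z < z) \<and> (z < hop \<sigma> k z \<longleftrightarrow> z < \<sigma> z)
           \<and> (inv (hop \<sigma> k) z < z \<longleftrightarrow> inv \<sigma> z < z) \<and> (z < inv (hop \<sigma> k) z \<longleftrightarrow> z < inv \<sigma> z)"
    and "\<And>z. orbit (hop \<sigma> k) z \<subseteq> orbit \<sigma> z"
    and "isdd (inv (hop \<sigma> k)) k"
    and "hop (inv (hop \<sigma> k)) k = inv \<sigma>"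
proof -
  define J where "J = hopJ \<sigma> k"
  define p where "p = inv \<sigma> k"
  define s where "s = \<sigma> k"
  define w where "w = (\<sigma> ^^ (J - 1)) k"
  define y where "y = (\<sigma> ^^ J) k"
  define \<rho> where "\<rho> = (inv \<sigma>)(s := p, k := w, y := k)"
  have permu: "permutation \<sigma>" using perm fin permutation_permutes by blast
  have iv: "\<And>x. inv \<sigma> (\<sigma> x) = x" "\<And>x. \<sigma> (inv \<sigma> x) = x"
    using permutes_inverses[OF perm] by auto
  have J1: "1 < J" and yk: "k < y" and below: "\<And>i. 0 < i \<Longrightarrow> i < J \<Longrightarrow> (\<sigma> ^^ i) k < k"
    using hopJ_props[OF perm fin dd] unfolding J_def y_def by auto
  have pk: "k < p" and sk: "s < k" using dd by (auto simp: isdd_def p_def s_def)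
  have wk: "w < k" unfolding w_def using below J1 by auto
  have sw: "\<sigma> w = y" unfolding w_def y_def using funpow_Suc_app[where f=\<sigma> and m="J-1" and x=k] J1
    by (metis Suc_pred' less_trans zero_less_one)
  have sp: "\<sigma> p = k" unfolding p_def using iv by simp
  have is_: "inv \<sigma> s = k" unfolding s_def using iv by simp
  have iy: "inv \<sigma> y = w" using sw iv by metis
  have hop_eq: "hop \<sigma> k = \<sigma>(p := s, w := k, k := y)"
    unfolding hop_def p_def s_def w_def y_def J_def ..
  define \<sigma>' where "\<sigma>' = \<sigma>(p := s, w := k, k := y)"
  have c1: "\<sigma>' (\<rho> z) = z" for z
  proof -
    consider "z = s" | "z = k" | "z = y" | "z \<noteq> s \<and> z \<noteq> k \<and> z \<noteq> y" by blast
    then show ?thesis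
    proof cases
      case 4
      then have "\<rho> z = inv \<sigma> z" unfolding \<rho>_def by simp
      moreover have "inv \<sigma> z \<noteq> p" using 4 iv sp by metis
      moreover have "inv \<sigma> z \<noteq> w" using 4 iv sw by metis
      moreover have "inv \<sigma> z \<noteq> k" using 4 iv s_def by metis
      ultimately show ?thesis unfolding \<sigma>'_def using iv by simp
    qed (use sk yk wk pk in \<open>auto simp: \<rho>_def \<sigma>'_def\<close>)
  qed
  have c2: "\<rho> (\<sigma>' z) = z" for z
  proof -
    consider "z = p" | "z = w" | "z = k" | "z \<noteq> p \<and> z \<noteq> w \<and> z \<noteq> k" by blast
    then show ?thesis
    proof cases
      case 4
      then have "\<sigma>' z = \<sigma> z" unfolding \<sigma>'_def by simp
      moreover have "\<sigma> z \<noteq> s" using 4 iv s_def by metis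
      moreover have "\<sigma> z \<noteq> k" using 4 iv sp by metis
      moreover have "\<sigma> z \<noteq> y" using 4 iv sw by metis
      ultimately show ?thesis unfolding \<rho>_def using iv by simp
    qed (use sk yk wk pk in \<open>auto simp: \<rho>_def \<sigma>'_def\<close>)
  qed
  have invh: "inv \<sigma>' = \<rho>"
    by (rule inv_unique_comp) (auto simp: fun_eq_iff c1 c2)
  have bijh: "bij \<sigma>'"
    by (rule o_bij[of \<rho>]) (auto simp: fun_eq_iff c1 c2)
  have pS: "p \<in> S" unfolding p_def using permutes_in_image[OF permutes_inv[OF perm]] kS by simp
  have wS: "w \<in> S" unfolding w_def using funpow_in_S[OF perm kS] .
  have hk: "\<sigma>' k = y" unfolding \<sigma>'_def by simp
  have rk: "\<rho> k = w" unfolding \<rho>_def using yk by simp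
  have hop_eq': "hop \<sigma> k = \<sigma>'" using hop_eq \<sigma>'_def by simp
  have outS: "\<sigma>' x = x" if "x \<notin> S" for x
  proof -
    have "x \<noteq> p" "x \<noteq> w" "x \<noteq> k" using pS wS kS that by auto
    then show ?thesis unfolding \<sigma>'_def using permutes_not_in[OF perm that] by simp
  qed
  show "hop \<sigma> k permutes S"
  proof -
    have "\<forall>u. \<exists>!x. \<sigma>' x = u" using bijh unfolding bij_iff by blast
    then show ?thesis unfolding permutes_def hop_eq' using outS by simp
  qed
  show "isda (hop \<sigma> k) k"
    unfolding isda_def hop_eq' invh hk rk using wk yk by simp
  show "(hop \<sigma> k z < z \<longleftrightarrow> \<sigma> z < z) \<and> (z < hop \<sigma> k z \<longleftrightarrow> z < \<sigma> z)
           \<and> (inv (hop \<sigma> k) z < z \<longleftrightarrow> inv \<sigma> z < z) \<and> (z < inv (hop \<sigma> k) z \<longleftrightarrow> z < inv \<sigma> z)"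
    if zk: "z \<noteq> k" for z
  proof -
    have A: "(\<sigma>' z < z \<longleftrightarrow> \<sigma> z < z) \<and> (z < \<sigma>' z \<longleftrightarrow> z < \<sigma> z)"
    proof (cases "z = p")
      case True then show ?thesis using sp sk pk wk unfolding \<sigma>'_def by auto
    next
      case False
      then show ?thesis
      proof (cases "z = w")
        case True then show ?thesis using sw sk pk wk yk zk False unfolding \<sigma>'_def by auto
      qed (use zk in \<open>simp add: \<sigma>'_def\<close>)
    qed
    have B: "(\<rho> z < z \<longleftrightarrow> inv \<sigma> z < z) \<and> (z < \<rho> z \<longleftrightarrow> z < inv \<sigma> z)"
    proof (cases "z = s")
      case True then show ?thesis using is_ sk pk yk unfolding \<rho>_def by auto
    next
      case False
      then show ?thesis
      proof (cases "z = y")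
        case True then show ?thesis using iy sk pk wk yk zk False unfolding \<rho>_def by auto
      qed (use zk in \<open>simp add: \<rho>_def\<close>)
    qed
    show ?thesis using A B unfolding hop_eq' invh by blast
  qed
  have step_in: "\<sigma>' u \<in> orbit \<sigma> u" for u
  proof -
    have kk: "k \<in> orbit \<sigma> k" using permu by (rule permutation_self_in_orbit)
    have yo: "y \<in> orbit \<sigma> k" unfolding y_def orbit_altdef using J1 by auto
    have wo: "w \<in> orbit \<sigma> k" unfolding w_def orbit_altdef using J1 by auto
    consider "u = k" | "u = w" | "u = p" | "u \<noteq> k \<and> u \<noteq> w \<and> u \<noteq> p" by blast
    then show ?thesis
    proof cases
      case 1 then show ?thesis using yo unfolding \<sigma>'_def by simp
    next
      case 2 then show ?thesis using orbit_swap[OF kk wo] wk unfolding \<sigma>'_def by auto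
    next
      case 3
      have "s \<in> orbit \<sigma> p" using sp unfolding s_def
        by (metis orbit.base orbit.step)
      then show ?thesis using 3 pk wk sk unfolding \<sigma>'_def by auto
    next
      case 4 then show ?thesis unfolding \<sigma>'_def by (simp add: orbit.base)
    qed
  qed
  show "orbit (hop \<sigma> k) z \<subseteq> orbit \<sigma> z" for z
  proof
    fix v assume "v \<in> orbit (hop \<sigma> k) z"
    then have "v \<in> orbit \<sigma>' z" unfolding hop_eq' .
    then show "v \<in> orbit \<sigma> z"
    proof induction
      case base then show ?case by (rule step_in)
    next
      case (step v) then show ?case using orbit_trans[OF step_in] by blast
    qed
  qed
  have iiv: "inv \<rho> = \<sigma>'" using invh bijh inv_inv_eq by metis
  show "isdd (inv (hop \<sigma> k)) k"
    unfolding isdd_def hop_eq \<sigma>'_def[symmetric] invh iiv using wk yk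
    by (simp add: \<sigma>'_def \<rho>_def)
  have rho_it: "(\<rho> ^^ i) k = (\<sigma> ^^ (J - i)) k" if "1 \<le> i" "i \<le> J - 1" for i
    using that
  proof (induction i)
    case 0 then show ?case by simp
  next
    case (Suc i)
    show ?case
    proof (cases "i = 0")
      case True
      then show ?thesis using yk sk unfolding \<rho>_def w_def by simp
    next
      case False
      then have IH: "(\<rho> ^^ i) k = (\<sigma> ^^ (J - i)) k" using Suc by auto
      define v where "v = (\<sigma> ^^ (J - i)) k"
      have Ji: "J - i = Suc (J - Suc i)" using Suc by auto
      have v_eq: "v = \<sigma> ((\<sigma> ^^ (J - Suc i)) k)" unfolding v_def Ji by simp
      have vk: "v < k" unfolding v_def using below[of "J - i"] Suc False by auto
      have lt2: "(\<sigma> ^^ (J - Suc i)) k < k" using below[of "J - Suc i"] Suc by auto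
      have vs: "v \<noteq> s"
      proof
        assume "v = s"
        then have "(\<sigma> ^^ (J - Suc i)) k = k" using v_eq iv unfolding s_def by metis
        then show False using lt2 by simp
      qed
      have "\<rho> v = inv \<sigma> v" unfolding \<rho>_def using vs vk yk by auto
      also have "\<dots> = (\<sigma> ^^ (J - Suc i)) k" using v_eq iv by simp
      finally show ?thesis using IH unfolding v_def by simp
    qed
  qed
  have rhoJ: "(\<rho> ^^ J) k = p"
  proof -
    have "(\<rho> ^^ J) k = \<rho> ((\<rho> ^^ (J - 1)) k)" using J1
      by (metis Suc_pred' funpow_Suc_app less_trans zero_less_one)
    also have "(\<rho> ^^ (J - 1)) k = (\<sigma> ^^ 1) k" using rho_it[of "J-1"] J1 by auto
    also have "\<rho> ((\<sigma> ^^ 1) k) = p" using sk yk unfolding \<rho>_def by (simp add: s_def)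
    finally show ?thesis .
  qed
  have hJ: "hopJ \<rho> k = J"
    unfolding hopJ_def
  proof (rule Least_equality)
    show "0 < J \<and> k < (\<rho> ^^ J) k" using J1 rhoJ pk by auto
    show "J \<le> m" if "0 < m \<and> k < (\<rho> ^^ m) k" for m
    proof (rule ccontr)
      assume "\<not> J \<le> m"
      then have "(\<rho> ^^ m) k = (\<sigma> ^^ (J - m)) k" using rho_it[of m] that by auto
      moreover have "(\<sigma> ^^ (J - m)) k < k" using below that \<open>\<not> J \<le> m\<close> by auto
      ultimately show False using that by auto
    qed
  qed
  have "hop \<rho> k = \<rho>(y := w, s := k, k := p)"
  proof -
    have "inv \<rho> k = y" using iiv unfolding \<sigma>'_def by simp
    moreover have "\<rho> k = w" using yk unfolding \<rho>_def by simp
    moreover have "(\<rho> ^^ (J - 1)) k = s" using rho_it[of "J-1"] J1 unfolding s_def by auto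
    ultimately show ?thesis unfolding hop_def hJ rhoJ by simp
  qed
  also have "\<dots> = inv \<sigma>"
  proof
    fix z
    show "(\<rho>(y := w, s := k, k := p)) z = inv \<sigma> z"
      using iy is_ unfolding \<rho>_def p_def by auto
  qed
  finally show "hop (inv (hop \<sigma> k)) k = inv \<sigma>" unfolding hop_eq' invh .
qed

definition DAs :: "nat \<Rightarrow> (nat \<Rightarrow> nat) \<Rightarrow> nat set" where
  "DAs n \<sigma> = {z\<in>{1..n}. isda \<sigma> z}"
definition DDs :: "nat \<Rightarrow> (nat \<Rightarrow> nat) \<Rightarrow> nat set" where
  "DDs n \<sigma> = {z\<in>{1..n}. isdd \<sigma> z}"

lemma derang_perm: "\<sigma> \<in> derangements n \<Longrightarrow> \<sigma> permutes {1..n}"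
  by (simp add: derangements_def)

lemma finite_derang: "finite (derangements n)"
proof -
  have "derangements n \<subseteq> {\<sigma>. \<sigma> permutes {1..n}}" by (auto simp: derangements_def)
  then show ?thesis using finite_permutations[of "{1..n}"] finite_subset by auto
qed

lemma inv_derang:
  assumes "\<sigma> \<in> derangements n" shows "inv \<sigma> \<in> derangements n"
proof -
  have perm: "\<sigma> permutes {1..n}" using assms by (simp add: derangements_def)
  have "inv \<sigma> i \<noteq> i" if "i \<in> {1..n}" for i
  proof
    assume "inv \<sigma> i = i"
    then have "\<sigma> i = i" using permutes_inverses(1)[OF perm, of i] by simp
    then show False using assms that by (auto simp: derangements_def)
  qed
  then show ?thesis using permutes_inv[OF perm] by (auto simp: derangements_def)
qed

lemma hop_facts:
  assumes D: "\<sigma> \<in> derangements n" and kS: "k \<in> {1..n}" and dd: "isdd \<sigma> k"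
  shows "hop \<sigma> k \<in> derangements n" "isda (hop \<sigma> k) k"
    "cyc n (hop \<sigma> k) = cyc n \<sigma>"
    "\<And>z. z \<noteq> k \<Longrightarrow> (isda (hop \<sigma> k) z \<longleftrightarrow> isda \<sigma> z) \<and> (isdd (hop \<sigma> k) z \<longleftrightarrow> isdd \<sigma> z)
        \<and> (inv (hop \<sigma> k) z < z \<and> hop \<sigma> k z < z \<longleftrightarrow> inv \<sigma> z < z \<and> \<sigma> z < z)"
    "cpk n (hop \<sigma> k) = cpk n \<sigma>"
    "inv (hop \<sigma> k) \<in> derangements n" "isdd (inv (hop \<sigma> k)) k"
    "hop (inv (hop \<sigma> k)) k = inv \<sigma>"
proof -
  have perm: "\<sigma> permutes {1..n}" using D by (simp add: derangements_def)
  have fin: "finite {1..n}" by simp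
  note M = hop_main[OF perm fin kS dd]
  have ty: "\<And>z. z \<noteq> k \<Longrightarrow> (isda (hop \<sigma> k) z \<longleftrightarrow> isda \<sigma> z) \<and> (isdd (hop \<sigma> k) z \<longleftrightarrow> isdd \<sigma> z)
        \<and> (inv (hop \<sigma> k) z < z \<and> hop \<sigma> k z < z \<longleftrightarrow> inv \<sigma> z < z \<and> \<sigma> z < z)"
    using M(3) unfolding isda_def isdd_def by blast
  then show "\<And>z. z \<noteq> k \<Longrightarrow> (isda (hop \<sigma> k) z \<longleftrightarrow> isda \<sigma> z) \<and> (isdd (hop \<sigma> k) z \<longleftrightarrow> isdd \<sigma> z)
        \<and> (inv (hop \<sigma> k) z < z \<and> hop \<sigma> k z < z \<longleftrightarrow> inv \<sigma> z < z \<and> \<sigma> z < z)" .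
  show "isda (hop \<sigma> k) k" using M(2) .
  have hD: "hop \<sigma> k \<in> derangements n"
  proof -
    have "hop \<sigma> k i \<noteq> i" if "i \<in> {1..n}" for i
    proof (cases "i = k")
      case True then show ?thesis using M(2) by (auto simp: isda_def)
    next
      case False
      have "\<sigma> i \<noteq> i" using D that by (auto simp: derangements_def)
      then have "\<sigma> i < i \<or> i < \<sigma> i" by auto
      then show ?thesis using M(3)[OF False] by auto
    qed
    then show ?thesis using M(1) by (auto simp: derangements_def)
  qed
  then show "hop \<sigma> k \<in> derangements n" .
  show "inv (hop \<sigma> k) \<in> derangements n" using inv_derang[OF hD] .
  show "isdd (inv (hop \<sigma> k)) k" using M(5) .
  show "hop (inv (hop \<sigma> k)) k = inv \<sigma>" using M(6) .
  have permh: "hop \<sigma> k permutes {1..n}" using M(1) .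
  have ph: "permutation (hop \<sigma> k)" using permh fin permutation_permutes by blast
  have ps: "permutation \<sigma>" using perm fin permutation_permutes by blast
  note M2 = hop_main[OF permutes_inv[OF permh] fin kS M(5)]
  have orb: "orbit (hop \<sigma> k) z = orbit \<sigma> z" for z
  proof
    show "orbit (hop \<sigma> k) z \<subseteq> orbit \<sigma> z" using M(4) .
    have "orbit (inv \<sigma>) z \<subseteq> orbit (inv (hop \<sigma> k)) z" using M2(4)[of z] unfolding M(6) .
    then show "orbit \<sigma> z \<subseteq> orbit (hop \<sigma> k) z"
      using orbit_inv_eq[OF ph] orbit_inv_eq[OF ps] by simp
  qed
  show "cyc n (hop \<sigma> k) = cyc n \<sigma>" unfolding cyc_def orb ..
  have "{x\<in>{1..n}. inv (hop \<sigma> k) x < x \<and> hop \<sigma> k x < x} = {x\<in>{1..n}. inv \<sigma> x < x \<and> \<sigma> x < x}"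
  proof (intro set_eqI iffI)
    fix x assume x: "x \<in> {x\<in>{1..n}. inv (hop \<sigma> k) x < x \<and> hop \<sigma> k x < x}"
    then have "x \<noteq> k" using M(2) by (auto simp: isda_def)
    then show "x \<in> {x\<in>{1..n}. inv \<sigma> x < x \<and> \<sigma> x < x}" using ty x by blast
  next
    fix x assume x: "x \<in> {x\<in>{1..n}. inv \<sigma> x < x \<and> \<sigma> x < x}"
    then have "x \<noteq> k" using dd by (auto simp: isdd_def)
    then show "x \<in> {x\<in>{1..n}. inv (hop \<sigma> k) x < x \<and> hop \<sigma> k x < x}" using ty x by blast
  qed
  then show "cpk n (hop \<sigma> k) = cpk n \<sigma>" unfolding cpk_def by simp
qed

definition RR :: "nat \<Rightarrow> real \<Rightarrow> real \<Rightarrow> real \<Rightarrow> real \<Rightarrow> real \<Rightarrow> nat set \<Rightarrow> (nat \<Rightarrow> nat) \<Rightarrow> real" where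
  "RR n q w a b c A \<sigma> = q ^ cyc n \<sigma> * w ^ cpk n \<sigma> * a ^ card (DAs n \<sigma> \<inter> A)
     * b ^ card (DDs n \<sigma> \<inter> A) * c ^ card ((DAs n \<sigma> \<union> DDs n \<sigma>) - A)"

lemma sum_step:
  assumes kS: "k \<in> {1..n}" and kA: "k \<notin> A" and c: "c = (a + b) / 2"
  shows "(\<Sum>\<sigma>\<in>derangements n. RR n q w a b c (insert k A) \<sigma>) = (\<Sum>\<sigma>\<in>derangements n. RR n q w a b c A \<sigma>)"
proof -
  define D where "D = derangements n"
  define D1 where "D1 = {\<sigma>\<in>D. isdd \<sigma> k}"
  define D2 where "D2 = {\<sigma>\<in>D. isda \<sigma> k}"
  define D3 where "D3 = {\<sigma>\<in>D. \<not> isdd \<sigma> k \<and> \<not> isda \<sigma> k}"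
  define R' where "R' \<sigma> = q ^ cyc n \<sigma> * w ^ cpk n \<sigma> * a ^ card (DAs n \<sigma> \<inter> A)
     * b ^ card (DDs n \<sigma> \<inter> A) * c ^ card ((DAs n \<sigma> \<union> DDs n \<sigma>) - insert k A)" for \<sigma>
  have finD: "finite D" unfolding D_def by (rule finite_derang)
  have excl: "\<not> (isdd \<sigma> k \<and> isda \<sigma> k)" for \<sigma> by (auto simp: isdd_def isda_def)
  have Dsplit: "D = D1 \<union> (D2 \<union> D3)" unfolding D1_def D2_def D3_def by auto
  have fins: "finite D1" "finite D2" "finite D3" using finD unfolding D1_def D2_def D3_def by auto
  have disj: "D1 \<inter> (D2 \<union> D3) = {}" "D2 \<inter> D3 = {}" unfolding D1_def D2_def D3_def using excl by auto
  have finDA: "finite (DAs n \<sigma>)" "finite (DDs n \<sigma>)" for \<sigma> by (auto simp: DAs_def DDs_def)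
  have r1: "RR n q w a b c (insert k A) \<sigma> = b * R' \<sigma>" "RR n q w a b c A \<sigma> = c * R' \<sigma>" if "\<sigma> \<in> D1" for \<sigma>
  proof -
    have kd: "k \<in> DDs n \<sigma>" "k \<notin> DAs n \<sigma>" using that kS excl unfolding D1_def DDs_def DAs_def by auto
    have e1: "DAs n \<sigma> \<inter> insert k A = DAs n \<sigma> \<inter> A" using kd by auto
    have e2: "DDs n \<sigma> \<inter> insert k A = insert k (DDs n \<sigma> \<inter> A)" using kd by auto
    have e3: "(DAs n \<sigma> \<union> DDs n \<sigma>) - A = insert k ((DAs n \<sigma> \<union> DDs n \<sigma>) - insert k A)" using kd kA by auto
    have "card (DDs n \<sigma> \<inter> insert k A) = Suc (card (DDs n \<sigma> \<inter> A))"
      unfolding e2 using kA finDA by auto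
    moreover have "card ((DAs n \<sigma> \<union> DDs n \<sigma>) - A) = Suc (card ((DAs n \<sigma> \<union> DDs n \<sigma>) - insert k A))"
      unfolding e3 using finDA by auto
    ultimately show "RR n q w a b c (insert k A) \<sigma> = b * R' \<sigma>" "RR n q w a b c A \<sigma> = c * R' \<sigma>"
      unfolding RR_def R'_def e1 by auto
  qed
  have r2: "RR n q w a b c (insert k A) \<sigma> = a * R' \<sigma>" "RR n q w a b c A \<sigma> = c * R' \<sigma>" if "\<sigma> \<in> D2" for \<sigma>
  proof -
    have kd: "k \<in> DAs n \<sigma>" "k \<notin> DDs n \<sigma>" using that kS excl unfolding D2_def DDs_def DAs_def by auto
    have e1: "DDs n \<sigma> \<inter> insert k A = DDs n \<sigma> \<inter> A" using kd by auto
    have e2: "DAs n \<sigma> \<inter> insert k A = insert k (DAs n \<sigma> \<inter> A)" using kd by auto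
    have e3: "(DAs n \<sigma> \<union> DDs n \<sigma>) - A = insert k ((DAs n \<sigma> \<union> DDs n \<sigma>) - insert k A)" using kd kA by auto
    have "card (DAs n \<sigma> \<inter> insert k A) = Suc (card (DAs n \<sigma> \<inter> A))"
      unfolding e2 using kA finDA by auto
    moreover have "card ((DAs n \<sigma> \<union> DDs n \<sigma>) - A) = Suc (card ((DAs n \<sigma> \<union> DDs n \<sigma>) - insert k A))"
      unfolding e3 using finDA by auto
    ultimately show "RR n q w a b c (insert k A) \<sigma> = a * R' \<sigma>" "RR n q w a b c A \<sigma> = c * R' \<sigma>"
      unfolding RR_def R'_def e1 by auto
  qed
  have r3: "RR n q w a b c (insert k A) \<sigma> = RR n q w a b c A \<sigma>" if "\<sigma> \<in> D3" for \<sigma>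
  proof -
    have kd: "k \<notin> DAs n \<sigma>" "k \<notin> DDs n \<sigma>" using that unfolding D3_def DDs_def DAs_def by auto
    then have "DAs n \<sigma> \<inter> insert k A = DAs n \<sigma> \<inter> A" "DDs n \<sigma> \<inter> insert k A = DDs n \<sigma> \<inter> A"
      "(DAs n \<sigma> \<union> DDs n \<sigma>) - insert k A = (DAs n \<sigma> \<union> DDs n \<sigma>) - A" by auto
    then show ?thesis unfolding RR_def by simp
  qed
  have bij: "bij_betw (\<lambda>\<sigma>. hop \<sigma> k) D1 D2"
  proof (rule bij_betw_byWitness[where f' = "\<lambda>\<tau>. inv (hop (inv \<tau>) k)"])
    show "\<forall>\<sigma>\<in>D1. inv (hop (inv (hop \<sigma> k)) k) = \<sigma>"
    proof
      fix \<sigma> assume s: "\<sigma> \<in> D1"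
      then have sD: "\<sigma> \<in> derangements n" "isdd \<sigma> k" unfolding D1_def D_def by auto
      have "inv (hop (inv (hop \<sigma> k)) k) = inv (inv \<sigma>)" using hop_facts(8)[OF sD(1) kS sD(2)] by simp
      also have "\<dots> = \<sigma>" using permutes_inv_inv[OF derang_perm[OF sD(1)]] .
      finally show "inv (hop (inv (hop \<sigma> k)) k) = \<sigma>" .
    qed
    have invD2: "inv \<tau> \<in> D1" if "\<tau> \<in> D2" for \<tau>
    proof -
      have tD: "\<tau> \<in> derangements n" "isda \<tau> k" using that unfolding D2_def D_def by auto
      have "inv (inv \<tau>) = \<tau>" using permutes_inv_inv[OF derang_perm[OF tD(1)]] .
      then have "isdd (inv \<tau>) k" using tD(2) unfolding isdd_def isda_def by simp
      then show ?thesis using inv_derang[OF tD(1)] unfolding D1_def D_def by auto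
    qed
    show "\<forall>\<tau>\<in>D2. hop (inv (hop (inv \<tau>) k)) k = \<tau>"
    proof
      fix \<tau> assume t: "\<tau> \<in> D2"
      have sD: "inv \<tau> \<in> derangements n" "isdd (inv \<tau>) k" using invD2[OF t] unfolding D1_def D_def by auto
      have "hop (inv (hop (inv \<tau>) k)) k = inv (inv \<tau>)" using hop_facts(8)[OF sD(1) kS sD(2)] .
      also have "\<dots> = \<tau>" using t unfolding D2_def D_def using permutes_inv_inv[OF derang_perm] by auto
      finally show "hop (inv (hop (inv \<tau>) k)) k = \<tau>" .
    qed
    show "(\<lambda>\<sigma>. hop \<sigma> k) ` D1 \<subseteq> D2"
      using hop_facts(1,2)[OF _ kS] unfolding D1_def D2_def D_def by auto
    show "(\<lambda>\<tau>. inv (hop (inv \<tau>) k)) ` D2 \<subseteq> D1"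
    proof
      fix x assume "x \<in> (\<lambda>\<tau>. inv (hop (inv \<tau>) k)) ` D2"
      then obtain \<tau> where t: "\<tau> \<in> D2" and x: "x = inv (hop (inv \<tau>) k)" by auto
      have sD: "inv \<tau> \<in> derangements n" "isdd (inv \<tau>) k" using invD2[OF t] unfolding D1_def D_def by auto
      show "x \<in> D1" using hop_facts(6,7)[OF sD(1) kS sD(2)] unfolding x D1_def D_def by auto
    qed
  qed
  have Rinv: "R' (hop \<sigma> k) = R' \<sigma>" if "\<sigma> \<in> D1" for \<sigma>
  proof -
    have sD: "\<sigma> \<in> derangements n" "isdd \<sigma> k" using that unfolding D1_def D_def by auto
    note H = hop_facts[OF sD(1) kS sD(2)]
    have tyA: "isda (hop \<sigma> k) z = isda \<sigma> z" if "z \<noteq> k" for z using H(4)[OF that] by blast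
    have tyD: "isdd (hop \<sigma> k) z = isdd \<sigma> z" if "z \<noteq> k" for z using H(4)[OF that] by blast
    have "DAs n (hop \<sigma> k) \<inter> A = DAs n \<sigma> \<inter> A"
      unfolding DAs_def using kA tyA by (auto; metis)
    moreover have "DDs n (hop \<sigma> k) \<inter> A = DDs n \<sigma> \<inter> A"
      unfolding DDs_def using kA tyD by (auto; metis)
    moreover have "(DAs n (hop \<sigma> k) \<union> DDs n (hop \<sigma> k)) - insert k A = (DAs n \<sigma> \<union> DDs n \<sigma>) - insert k A"
      unfolding DDs_def DAs_def using tyA tyD by (auto; metis)
    ultimately show ?thesis unfolding R'_def H(3) H(5) by simp
  qed
  have s12: "sum R' D2 = sum R' D1"
    using sum.reindex_bij_betw[OF bij, of R'] Rinv by simp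
  have "(\<Sum>\<sigma>\<in>D. RR n q w a b c (insert k A) \<sigma>) = b * sum R' D1 + (a * sum R' D2 + (\<Sum>\<sigma>\<in>D3. RR n q w a b c A \<sigma>))"
    unfolding Dsplit using fins disj r1 r2 r3
    by (simp add: sum.union_disjoint sum_distrib_left)
  also have "\<dots> = c * sum R' D1 + (c * sum R' D2 + (\<Sum>\<sigma>\<in>D3. RR n q w a b c A \<sigma>))"
    by (simp add: s12 c field_simps)
  also have "\<dots> = (\<Sum>\<sigma>\<in>D. RR n q w a b c A \<sigma>)"
    unfolding Dsplit using fins disj r1 r2 r3
    by (simp add: sum.union_disjoint sum_distrib_left)
  finally show ?thesis unfolding D_def .
qed

lemma sum_all:
  assumes "A \<subseteq> {1..n}" and c: "c = (a + b) / 2"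
  shows "(\<Sum>\<sigma>\<in>derangements n. RR n q w a b c A \<sigma>) = (\<Sum>\<sigma>\<in>derangements n. RR n q w a b c {} \<sigma>)"
proof -
  have "finite A" using assms(1) finite_subset by blast
  then show ?thesis using assms(1)
  proof (induction A rule: finite_induct)
    case (insert k A)
    then show ?case using sum_step[OF _ insert(2) c] by auto
  qed simp
qed

lemma counts:
  assumes D: "\<sigma> \<in> derangements n"
  shows "n = 2 * cpk n \<sigma> + card (DAs n \<sigma>) + card (DDs n \<sigma>)" "exc n \<sigma> = cpk n \<sigma> + card (DAs n \<sigma>)"
proof -
  define S where "S = {1..n::nat}"
  have perm: "\<sigma> permutes S" using D by (simp add: derangements_def S_def)
  have fp: "\<sigma> z \<noteq> z" if "z \<in> S" for z using D that by (auto simp: derangements_def S_def)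
  have ifp: "inv \<sigma> z \<noteq> z" if "z \<in> S" for z using inv_derang[OF D] that by (auto simp: derangements_def S_def)
  have iv: "\<And>x. inv \<sigma> (\<sigma> x) = x" "\<And>x. \<sigma> (inv \<sigma> x) = x"
    using permutes_inverses[OF perm] by auto
  define E where "E = {z\<in>S. z < \<sigma> z}"
  define I where "I = {z\<in>S. inv \<sigma> z < z}"
  define PK where "PK = {z\<in>S. inv \<sigma> z < z \<and> \<sigma> z < z}"
  define L where "L = {z\<in>S. \<sigma> z < z}"
  have finS: "finite S" unfolding S_def by simp
  have fins: "finite E" "finite I" "finite PK" "finite L" "finite (DAs n \<sigma>)" "finite (DDs n \<sigma>)"
    using finS unfolding E_def I_def PK_def L_def DAs_def DDs_def by auto
  have "\<sigma> ` E = I"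
  proof (intro set_eqI iffI)
    fix u assume "u \<in> \<sigma> ` E"
    then obtain z where z: "z \<in> E" "u = \<sigma> z" by auto
    then show "u \<in> I" using permutes_in_image[OF perm] iv unfolding E_def I_def by auto
  next
    fix u assume u: "u \<in> I"
    have "inv \<sigma> u \<in> E" using u permutes_in_image[OF permutes_inv[OF perm]] iv unfolding E_def I_def by auto
    then show "u \<in> \<sigma> ` E" using iv(2)[of u] by (metis image_eqI)
  qed
  moreover have "inj_on \<sigma> E" using permutes_inj[OF perm] inj_on_subset by blast
  ultimately have cEI: "card E = card I" using card_image by metis
  have "I = PK \<union> DAs n \<sigma>" unfolding I_def PK_def DAs_def isda_def S_def using fp S_def by fastforce
  moreover have "PK \<inter> DAs n \<sigma> = {}" unfolding PK_def DAs_def isda_def by auto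
  ultimately have cI: "card I = card PK + card (DAs n \<sigma>)" using fins card_Un_disjoint by metis
  have "L = PK \<union> DDs n \<sigma>" unfolding L_def PK_def DDs_def isdd_def S_def using ifp S_def by fastforce
  moreover have "PK \<inter> DDs n \<sigma> = {}" unfolding PK_def DDs_def isdd_def by auto
  ultimately have cL: "card L = card PK + card (DDs n \<sigma>)" using fins card_Un_disjoint by metis
  have "S = E \<union> L" unfolding E_def L_def using fp by fastforce
  moreover have "E \<inter> L = {}" unfolding E_def L_def by auto
  ultimately have "card S = card E + card L" using fins card_Un_disjoint by metis
  moreover have "card S = n" unfolding S_def by simp
  moreover have "cpk n \<sigma> = card PK" unfolding cpk_def PK_def S_def ..
  moreover have "exc n \<sigma> = card E" unfolding exc_def E_def S_def by simp
  ultimately show "n = 2 * cpk n \<sigma> + card (DAs n \<sigma>) + card (DDs n \<sigma>)" "exc n \<sigma> = cpk n \<sigma> + card (DAs n \<sigma>)"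
    using cEI cI cL by auto
qed

lemma alg:
  fixes x t :: real
  assumes "1 + x \<noteq> 0" and "x + t \<noteq> 0" and "1 + x * t \<noteq> 0"
  shows "((1 + x * t) / (1 + x)) ^ (2 * p + d1 + d2) *
     (((1 + x)^2 * t / ((x + t) * (1 + x * t))) ^ p * ((x + t) / (1 + x * t)) ^ (p + d1))
    = t ^ p * ((x + t) / (1 + x)) ^ d1 * ((1 + x * t) / (1 + x)) ^ d2"
proof -
  define K where "K = (1 + x * t) / (1 + x)"
  define X where "X = (1 + x)^2 * t / ((x + t) * (1 + x * t))"
  define Y where "Y = (x + t) / (1 + x * t)"
  have "K ^ (2 * p + d1 + d2) * (X ^ p * Y ^ (p + d1)) = (K * K * X * Y) ^ p * (K * Y) ^ d1 * K ^ d2"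
  proof -
    have e1: "K ^ (2 * p + d1 + d2) = K^p * K^p * K^d1 * K^d2" by (simp add: power_add mult_2)
    have e2: "Y ^ (p + d1) = Y^p * Y^d1" by (simp add: power_add)
    have e3: "(K * K * X * Y) ^ p * (K * Y) ^ d1 * K ^ d2 = K^p * K^p * X^p * Y^p * (K^d1 * Y^d1) * K^d2"
      by (simp only: power_mult_distrib)
    show ?thesis unfolding e1 e2 e3 by (simp only: ac_simps)
  qed
  moreover have "K * K * X * Y = t"
  proof -
    have "K * K * X * Y
      = (t * ((1 + x)*(1 + x) * (x + t) * (1 + x * t) * (1 + x * t))) / ((1 + x)*(1 + x) * (x + t) * (1 + x * t) * (1 + x * t))"
      unfolding K_def X_def Y_def by (simp add: power2_eq_square ac_simps)
    also have "\<dots> = t" using assms by simp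
    finally show ?thesis .
  qed
  moreover have "K * Y = (x + t) / (1 + x)"
  proof -
    have "K * Y = ((x + t) * (1 + x * t)) / ((1 + x) * (1 + x * t))"
      unfolding K_def Y_def by (simp add: ac_simps)
    also have "\<dots> = (x + t) / (1 + x)" using assms by simp
    finally show ?thesis .
  qed
  ultimately show ?thesis unfolding K_def X_def Y_def by simp
qed

theorem theorem3p9:
  fixes n :: nat and q x t :: real
  assumes "n \<ge> 1"
    and "1 + x \<noteq> 0" and "x + t \<noteq> 0" and "1 + x * t \<noteq> 0"
  shows "(\<Sum>\<sigma>\<in>derangements n. q ^ cyc n \<sigma> * t ^ exc n \<sigma>)
    = ((1 + x * t) / (1 + x)) ^ n *
      (\<Sum>\<sigma>\<in>derangements n. q ^ cyc n \<sigma>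
          * ((1 + x)^2 * t / ((x + t) * (1 + x * t))) ^ cpk n \<sigma>
          * ((x + t) / (1 + x * t)) ^ exc n \<sigma>)"
proof -
  define a where "a = (x + t) / (1 + x)"
  define b where "b = (1 + x * t) / (1 + x)"
  define c where "c = (1 + t) / 2"
  have "a + b = ((x + t) + (1 + x * t)) / (1 + x)" unfolding a_def b_def by (simp add: add_divide_distrib)
  also have "(x + t) + (1 + x * t) = (1 + t) * (1 + x)" by (simp add: algebra_simps)
  also have "(1 + t) * (1 + x) / (1 + x) = 1 + t" using assms(2) by simp
  finally have cab: "c = (a + b) / 2" unfolding c_def by simp
  have c1: "c = (t + 1) / 2" unfolding c_def by simp
  have sub: "DAs n \<sigma> \<subseteq> {1..n}" "DDs n \<sigma> \<subseteq> {1..n}" for \<sigma> unfolding DAs_def DDs_def by auto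
  have L: "q ^ cyc n \<sigma> * t ^ exc n \<sigma> = RR n q t t 1 c {1..n} \<sigma>" if "\<sigma> \<in> derangements n" for \<sigma>
  proof -
    have e1: "DAs n \<sigma> \<inter> {1..n} = DAs n \<sigma>" and e2: "(DAs n \<sigma> \<union> DDs n \<sigma>) - {1..n} = {}" using sub by auto
    show ?thesis unfolding RR_def counts(2)[OF that] e1 e2 by (simp add: power_add)
  qed
  have R: "((1 + x * t) / (1 + x)) ^ n * (q ^ cyc n \<sigma>
          * ((1 + x)^2 * t / ((x + t) * (1 + x * t))) ^ cpk n \<sigma>
          * ((x + t) / (1 + x * t)) ^ exc n \<sigma>) = RR n q t a b c {1..n} \<sigma>" if "\<sigma> \<in> derangements n" for \<sigma>
  proof -
    have e: "DAs n \<sigma> \<inter> {1..n} = DAs n \<sigma>" "DDs n \<sigma> \<inter> {1..n} = DDs n \<sigma>" "(DAs n \<sigma> \<union> DDs n \<sigma>) - {1..n} = {}" using sub by auto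
    have "((1 + x * t) / (1 + x)) ^ n * (((1 + x)^2 * t / ((x + t) * (1 + x * t))) ^ cpk n \<sigma>
          * ((x + t) / (1 + x * t)) ^ exc n \<sigma>) = t ^ cpk n \<sigma> * a ^ card (DAs n \<sigma>) * b ^ card (DDs n \<sigma>)"
      unfolding a_def b_def
      apply (subst counts(1)[OF that])
      apply (subst counts(2)[OF that])
      using alg[OF assms(2-4)] by blast
    then show ?thesis unfolding RR_def e by (simp add: algebra_simps)
  qed
  have Lz: "RR n q t t 1 c {} \<sigma> = RR n q t a b c {} \<sigma>" for \<sigma> unfolding RR_def by simp
  have "(\<Sum>\<sigma>\<in>derangements n. q ^ cyc n \<sigma> * t ^ exc n \<sigma>) = (\<Sum>\<sigma>\<in>derangements n. RR n q t t 1 c {1..n} \<sigma>)"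
    using L by (rule sum.cong[OF refl])
  also have "\<dots> = (\<Sum>\<sigma>\<in>derangements n. RR n q t t 1 c {} \<sigma>)"
    by (rule sum_all) (auto simp: c1)
  also have "\<dots> = (\<Sum>\<sigma>\<in>derangements n. RR n q t a b c {} \<sigma>)" using Lz by simp
  also have "\<dots> = (\<Sum>\<sigma>\<in>derangements n. RR n q t a b c {1..n} \<sigma>)"
    by (rule sum_all[symmetric]) (auto simp: cab)
  also have "\<dots> = (\<Sum>\<sigma>\<in>derangements n. ((1 + x * t) / (1 + x)) ^ n * (q ^ cyc n \<sigma>
          * ((1 + x)^2 * t / ((x + t) * (1 + x * t))) ^ cpk n \<sigma>
          * ((x + t) / (1 + x * t)) ^ exc n \<sigma>))"
    using R by (intro sum.cong[OF refl]) simp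
  also have "\<dots> = ((1 + x * t) / (1 + x)) ^ n * (\<Sum>\<sigma>\<in>derangements n. q ^ cyc n \<sigma>
          * ((1 + x)^2 * t / ((x + t) * (1 + x * t))) ^ cpk n \<sigma>
          * ((x + t) / (1 + x * t)) ^ exc n \<sigma>)"
    by (simp add: sum_distrib_left)
  finally show ?thesis .
qed

end
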